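(* Let $m,n,p\ge 1$, let $B\in\mathbb{R}^{m\times n}$ (standing for the current warped image $D\circ\tau$), let $J:\mathbb{R}^p\to\mathbb{R}^{m\times n}$ be a linear map with adjoint $J^*$ such that $J^*J$ is invertible, and let $\lambda>0$, $\sigma>0$. Define, for $X,E\in\mathbb{R}^{m\times n}$, $\Delta\tau\in\mathbb{R}^p$, $Y\in\mathbb{R}^{m\times n}$, $$\mathcal{L}_\sigma(X,E,\Delta\tau;Y)=\|X\|_*+\lambda\|E\|_1+\langle Y,B+J\Delta\tau-X-E\rangle+\tfrac{\sigma}{2}\|B+J\Delta\tau-X-E\|_F^2 .$$ Fix $X^{k+1},E^k,Y^k\in\mathbb{R}^{m\times n}$ and $\Delta\tau^k\in\mathbb{R}^p$, and define successively $$\Delta\tau^{k+1/2}=\operatorname{argmin}_{\Delta\tau}\mathcal{L}_\sigma(X^{k+1},E^k,\Delta\tau;Y^k),\quad E^{k+1}=\operatorname{argmin}_{E}\mathcal{L}_\sigma(X^{k+1},E,\Delta\tau^{k+1/2};Y^k),$$ $$\Delta\tau^{k+1}=\operatorname{argmin}_{\Delta\tau}\mathcal{L}_\sigma(X^{k+1},E^{k+1},\Delta\tau;Y^k).$$ Let $\mathcal{T}$ be the self-adjoint positive semidefinite linear operator on $\mathbb{R}^{m\times n}\times\mathbb{R}^p$ given by $\mathcal{T}(E,\Delta\tau)=\big(J(J^*J)^{-1}J^*E,\,0\big)$, and $\|w\|_{\mathcal{T}}^2=\langle w,\mathcal{T}w\rangle$. Then $$(E^{k+1},\Delta\tau^{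k+1})=\operatorname{argmin}_{E,\Delta\tau}\Big\{\mathcal{L}_\sigma(X^{k+1},E,\Delta\tau;Y^k)+\tfrac{\sigma}{2}\big\|(E,\Delta\tau)-(E^k,\Delta\tau^k)\big\|_{\mathcal{T}}^2\Big\}.$$
   Context: $\|X\|_*$ is the nuclear norm (sum of singular values), $\|E\|_1$ the sum of absolute values of entries, $\|\cdot\|_F$ the Frobenius norm, and $\langle\cdot,\cdot\rangle$ the trace inner product. All argmins above have unique minimizers. *)

theory Defs
  imports "HOL-Analysis.Analysis"
begin

text \<open>Matrices in R^(m x n) are represented as real^'n^'m; the Frobenius norm is
  norm, and the trace inner product is the inner product \<bullet> on this type.\<close>

definition psd_sqrt :: "real^'n^'n \<Rightarrow> real^'n^'n" where
  "psd_sqrt M = (THE S. transpose S = S \<and> (\<forall>x. 0 \<le> x \<bullet> (S *v x)) \<and> S ** S = M)"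

text \<open>Nuclear norm = sum of singular values = trace of the PSD square root of A^T A.\<close>
definition nuclear_norm :: "real^'n^'m \<Rightarrow> real" where
  "nuclear_norm A = trace (psd_sqrt (transpose A ** A))"

definition l1_norm :: "real^'n^'m \<Rightarrow> real" where
  "l1_norm E = (\<Sum>i\<in>UNIV. \<Sum>j\<in>UNIV. \<bar>E $ i $ j\<bar>)"

definition aug_lag ::
  "real \<Rightarrow> real \<Rightarrow> real^'n^'m \<Rightarrow> (real^'p \<Rightarrow> real^'n^'m)
    \<Rightarrow> real^'n^'m \<Rightarrow> real^'n^'m \<Rightarrow> real^'p \<Rightarrow> real^'n^'m \<Rightarrow> real" where
  "aug_lag lam sig B J X E dt Y =
     nuclear_norm X + lam * l1_norm E + Y \<bullet> (B + J dt - X - E)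
     + sig / 2 * (norm (B + J dt - X - E))\<^sup>2"

definition T_op :: "(real^'p \<Rightarrow> real^'n^'m) \<Rightarrow> (real^'n^'m) \<times> (real^'p) \<Rightarrow> (real^'n^'m) \<times> (real^'p)" where
  "T_op J w = (J (inv (adjoint J \<circ> J) (adjoint J (fst w))), 0)"

definition T_seminorm_sq :: "(real^'p \<Rightarrow> real^'n^'m) \<Rightarrow> (real^'n^'m) \<times> (real^'p) \<Rightarrow> real" where
  "T_seminorm_sq J w = w \<bullet> T_op J w"

end

theory Submission
  imports Defs
begin

lemma l1_convex:
  fixes a b :: "real^'n^'m"
  assumes "0 \<le> t" "t \<le> 1"
  shows "l1_norm ((1-t) *\<^sub>R a + t *\<^sub>R b) \<le> (1-t) * l1_norm a + t * l1_norm b"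
proof -
  have "\<And>i j. \<bar>((1-t) *\<^sub>R a + t *\<^sub>R b) $ i $ j\<bar> \<le> (1-t) * \<bar>a $ i $ j\<bar> + t * \<bar>b $ i $ j\<bar>"
  proof -
    fix i j
    have "\<bar>((1-t) *\<^sub>R a + t *\<^sub>R b) $ i $ j\<bar> = \<bar>(1-t) * a $ i $ j + t * b $ i $ j\<bar>" by simp
    also have "\<dots> \<le> \<bar>(1-t) * a $ i $ j\<bar> + \<bar>t * b $ i $ j\<bar>" by (rule abs_triangle_ineq)
    also have "\<dots> = (1-t) * \<bar>a $ i $ j\<bar> + t * \<bar>b $ i $ j\<bar>" using assms by (simp add: abs_mult)
    finally show "?thesis i j" .
  qed
  then have "l1_norm ((1-t) *\<^sub>R a + t *\<^sub>R b) \<le> (\<Sum>i\<in>UNIV. \<Sum>j\<in>UNIV. (1-t) * \<bar>a $ i $ j\<bar> + t * \<bar>b $ i $ j\<bar>)"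
    unfolding l1_norm_def by (intro sum_mono) auto
  also have "\<dots> = (1-t) * l1_norm a + t * l1_norm b"
    unfolding l1_norm_def by (simp add: sum.distrib sum_distrib_left)
  finally show ?thesis .
qed

lemma quad_zero:
  fixes a b :: real
  assumes "b \<ge> 0" "\<forall>t. 0 \<le> a*t + b*t^2"
  shows "a = 0"
proof -
  define c where "c = a/(b+1)"
  have ac: "a = c*(b+1)" using assms(1) by (simp add: c_def)
  have "0 \<le> a*(-c) + b*(-c)^2" using assms(2) by blast
  also have "\<dots> = -(c^2)" unfolding ac by (simp add: power2_eq_square algebra_simps)
  finally have "c = 0" by simp
  then show ?thesis using ac by simp
qed

lemma quad_pos:
  fixes A C :: real
  assumes "C \<ge> 0" "\<forall>t. 0 < t \<longrightarrow> t < 1 \<longrightarrow> 0 \<le> t*A + t^2*C"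
  shows "A \<ge> 0"
proof (rule ccontr)
  assume "\<not> A \<ge> 0"
  define t where "t = min (1/2) (-A/(2*(C+1)))"
  have t0: "0 < t" "t < 1" using \<open>\<not> A \<ge> 0\<close> assms(1) by (auto simp: t_def divide_neg_pos)
  have "t*C \<le> (-A/(2*(C+1)))*C" using assms(1) by (intro mult_right_mono) (auto simp: t_def)
  also have "\<dots> \<le> -A/2" using assms(1) \<open>\<not> A \<ge> 0\<close> by (simp add: field_simps)
  finally have "A + t*C < 0" using \<open>\<not> A \<ge> 0\<close> by linarith
  then have "t*(A + t*C) < 0" using t0 by (simp add: mult_pos_neg)
  moreover have "0 \<le> t*A + t^2*C" using assms(2) t0 by blast
  ultimately show False by (simp add: power2_eq_square algebra_simps)
qed

lemma nsq: "(norm (x + y::'a::real_inner))\<^sup>2 = (norm x)\<^sup>2 + 2 * (x \<bullet> y) + (norm y)\<^sup>2"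
  by (simp add: power2_norm_eq_inner inner_add_left inner_add_right inner_commute)

lemma nsq_scale: "(norm (t *\<^sub>R x::'a::real_normed_vector))\<^sup>2 = t^2 * (norm x)\<^sup>2"
  by (simp add: power_mult_distrib)

lemma dt_opt:
  fixes J :: "real^'p \<Rightarrow> real^'n^'m"
  assumes "linear J" "sig > 0" "\<forall>dt. aug_lag lam sig B J X E dt0 Y \<le> aug_lag lam sig B J X E dt Y"
  shows "(Y + sig *\<^sub>R (B + J dt0 - X - E)) \<bullet> J v = 0"
proof -
  let ?r = "B + J dt0 - X - E"
  have "\<forall>t. 0 \<le> ((Y + sig *\<^sub>R ?r) \<bullet> J v)*t + (sig/2 * (norm (J v))\<^sup>2)*t^2"
  proof
    fix t
    have e: "B + J (dt0 + t *\<^sub>R v) - X - E = ?r + t *\<^sub>R J v"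
      using linear_add[OF assms(1)] linear_scale[OF assms(1)] by (simp add: algebra_simps)
    have "aug_lag lam sig B J X E dt0 Y \<le> aug_lag lam sig B J X E (dt0 + t *\<^sub>R v) Y" using assms(3) by blast
    then show "0 \<le> ((Y + sig *\<^sub>R ?r) \<bullet> J v)*t + (sig/2 * (norm (J v))\<^sup>2)*t^2"
      unfolding aug_lag_def e nsq nsq_scale by (simp add: inner_add_left inner_add_right inner_diff_right inner_scaleR_right distrib_left power2_eq_square) (simp add: algebra_simps)
  qed
  then show ?thesis using assms(2) by (intro quad_zero[where b="sig/2 * (norm (J v))\<^sup>2"]) auto
qed

lemma arith_helper1:
  fixes nu lam a b y t yd sig r2 rd d2 :: real
  shows "nu + lam*a + y + sig/2*r2 \<le> nu + lam*b + (y - t*yd) + sig/2*(r2 - 2*t*rd + t^2*d2) \<Longrightarrow>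
     0 \<le> lam*(b - a) - t*(yd + sig*rd) + t^2*(sig/2*d2)"
  by (simp add: field_simps)

lemma arith_helper2:
  fixes x t d q lam m :: real
  shows "0 \<le> x - t*d + t^2*q \<Longrightarrow> x \<le> lam*(t*m) \<Longrightarrow> 0 \<le> t*(lam*m - d) + t^2*q"
  by (simp add: algebra_simps)

lemma E_opt:
  fixes J :: "real^'p \<Rightarrow> real^'n^'m"
  assumes "lam \<ge> 0" "sig > 0" "\<forall>E. aug_lag lam sig B J X E1 dt0 Y \<le> aug_lag lam sig B J X E dt0 Y"
  shows "(Y + sig *\<^sub>R (B + J dt0 - X - E1)) \<bullet> (E - E1) \<le> lam * (l1_norm E - l1_norm E1)"
proof -
  define rr where "rr = B + J dt0 - X - E1"
  define dd where "dd = E - E1"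
  have "\<forall>t. 0 < t \<longrightarrow> t < 1 \<longrightarrow> 0 \<le> t*(lam*(l1_norm E - l1_norm E1) - (Y + sig *\<^sub>R rr) \<bullet> dd) + t^2*(sig/2*(norm dd)\<^sup>2)"
  proof (intro allI impI)
    fix t :: real assume t: "0 < t" "t < 1"
    define Et where "Et = E1 + t *\<^sub>R dd"
    have Et': "Et = (1-t) *\<^sub>R E1 + t *\<^sub>R E" unfolding Et_def dd_def by (simp add: algebra_simps)
    have conv: "l1_norm Et \<le> (1-t) * l1_norm E1 + t * l1_norm E"
      unfolding Et' using t by (intro l1_convex) auto
    have r: "B + J dt0 - X - Et = rr + (- t) *\<^sub>R dd" unfolding Et_def rr_def by (simp add: algebra_simps)
    have r1: "B + J dt0 - X - E1 = rr" unfolding rr_def by simp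
    have aug: "aug_lag lam sig B J X E1 dt0 Y \<le> aug_lag lam sig B J X Et dt0 Y" using assms(3) by blast
    have n: "(norm (rr + (-t) *\<^sub>R dd))\<^sup>2 = (norm rr)\<^sup>2 - 2*t*(rr \<bullet> dd) + t^2*(norm dd)\<^sup>2"
      unfolding nsq nsq_scale by simp
    moreover have i: "Y \<bullet> (rr + (-t) *\<^sub>R dd) = Y \<bullet> rr - t*(Y \<bullet> dd)" by (simp add: inner_diff_right)
    have h: "nuclear_norm X + lam*l1_norm E1 + Y \<bullet> rr + sig/2*(norm rr)\<^sup>2 \<le> nuclear_norm X + lam*l1_norm Et + (Y \<bullet> rr - t*(Y \<bullet> dd)) + sig/2*((norm rr)\<^sup>2 - 2*t*(rr \<bullet> dd) + t^2*(norm dd)\<^sup>2)"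
      using aug unfolding aug_lag_def r r1 n i .
    have g1: "0 \<le> lam * (l1_norm Et - l1_norm E1) - t * ((Y + sig *\<^sub>R rr) \<bullet> dd) + t^2*(sig/2*(norm dd)\<^sup>2)"
      unfolding inner_add_left inner_scaleR_left by (rule arith_helper1[OF h])
    have g2: "lam * (l1_norm Et - l1_norm E1) \<le> lam * (t * (l1_norm E - l1_norm E1))"
      using conv assms(1) by (intro mult_left_mono) (auto simp: algebra_simps)
    from g1 g2 show "0 \<le> t*(lam*(l1_norm E - l1_norm E1) - (Y + sig *\<^sub>R rr) \<bullet> dd) + t^2*(sig/2*(norm dd)\<^sup>2)"
      by (rule arith_helper2)
  qed
  moreover have Cnn: "0 \<le> sig/2*(norm dd)\<^sup>2" using assms(2) by simp
  ultimately have "0 \<le> lam*(l1_norm E - l1_norm E1) - (Y + sig *\<^sub>R rr) \<bullet> dd" using quad_pos[OF Cnn] by blast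
  then show ?thesis unfolding rr_def dd_def by simp
qed

lemma fin_helper:
  fixes augE aug1 L yd sig rd nu2 pz T1 T0 p2 :: real
  shows "augE = aug1 + L - (yd + sig*rd) + sig/2*nu2 \<Longrightarrow> yd + sig*rd - sig*pz \<le> L \<Longrightarrow>
    T1 = T0 + p2 + 2*pz \<Longrightarrow> 0 < sig*(nu2+p2) \<Longrightarrow> aug1 + sig/2*T0 < augE + sig/2*T1"
  by (simp add: algebra_simps)

theorem lemma1:
  fixes B Xk1 Ek Yk :: "real^'n^'m"
    and J :: "real^'p \<Rightarrow> real^'n^'m"
    and dtk dthalf dtk1 :: "real^'p"
    and Ek1 :: "real^'n^'m"
    and lam sig :: real
  assumes "linear J"
    and "bij (adjoint J \<circ> J)"
    and "lam > 0" and "sig > 0"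
    and "\<forall>dt. aug_lag lam sig B J Xk1 Ek dthalf Yk \<le> aug_lag lam sig B J Xk1 Ek dt Yk"
    and "\<forall>E. aug_lag lam sig B J Xk1 Ek1 dthalf Yk \<le> aug_lag lam sig B J Xk1 E dthalf Yk"
    and "\<forall>dt. aug_lag lam sig B J Xk1 Ek1 dtk1 Yk \<le> aug_lag lam sig B J Xk1 Ek1 dt Yk"
  shows "\<forall>E dt. (E, dt) \<noteq> (Ek1, dtk1) \<longrightarrow>
           aug_lag lam sig B J Xk1 Ek1 dtk1 Yk + sig / 2 * T_seminorm_sq J ((Ek1, dtk1) - (Ek, dtk))
         < aug_lag lam sig B J Xk1 E dt Yk + sig / 2 * T_seminorm_sq J ((E, dt) - (Ek, dtk))"
proof (intro allI impI)
  fix E dt assume ne: "(E, dt) \<noteq> (Ek1, dtk1)"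
  have linJ: "linear J" by fact
  have linA: "linear (adjoint J)" by (rule adjoint_linear[OF linJ])
  have adj: "J x \<bullet> y = x \<bullet> adjoint J y" for x y using adjoint_works[OF linJ] by simp
  define g where "g u = inv (adjoint J \<circ> J) (adjoint J u)" for u
  have Kg: "adjoint J (J (g u)) = adjoint J u" for u
    using surj_f_inv_f[OF bij_is_surj[OF assms(2)]] unfolding g_def by simp
  have perp: "(u - J (g u)) \<bullet> J v = 0" for u v
  proof -
    have "(u - J (g u)) \<bullet> J v = v \<bullet> adjoint J (u - J (g u))" by (simp add: adj inner_commute)
    also have "\<dots> = 0" by (simp add: linear_diff[OF linA] Kg)
    finally show ?thesis .
  qed
  have uniq: "g u = a" if h: "\<forall>v. (u - J a) \<bullet> J v = 0" for u a
  proof -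
    have "(u - J a) \<bullet> J (adjoint J (u - J a)) = 0" using h by blast
    then have "adjoint J (u - J a) \<bullet> adjoint J (u - J a) = 0" by (metis adj inner_commute)
    then have "adjoint J (u - J a) = 0" by simp
    then have "adjoint J u = (adjoint J \<circ> J) a" by (simp add: linear_diff[OF linA])
    then show ?thesis unfolding g_def using inv_f_f[OF bij_is_inj[OF assms(2)]] by simp
  qed
  have Tf: "T_seminorm_sq J w = fst w \<bullet> J (g (fst w))" for w
    unfolding T_seminorm_sq_def T_op_def g_def inner_prod_def by simp
  have q: "(Yk + sig *\<^sub>R (B + J dthalf - Xk1 - Ek)) \<bullet> J v = 0" for v
    by (rule dt_opt[OF linJ assms(4) assms(5)])
  have q1: "(Yk + sig *\<^sub>R (B + J dtk1 - Xk1 - Ek1)) \<bullet> J v = 0" for v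
    by (rule dt_opt[OF linJ assms(4) assms(7)])
  have Eo: "(Yk + sig *\<^sub>R (B + J dthalf - Xk1 - Ek1)) \<bullet> (E - Ek1) \<le> lam * (l1_norm E - l1_norm Ek1)"
    using E_opt[OF _ assms(4) assms(6)] assms(3) by simp
  define w where "w = Ek1 - Ek"
  define z where "z = dtk1 - dthalf"
  define d where "d = E - Ek1"
  define e where "e = dt - dtk1"
  define r1 where "r1 = B + J dtk1 - Xk1 - Ek1"
  have Jz: "J z = J dtk1 - J dthalf" unfolding z_def by (simp add: linear_diff[OF linJ])
  have Je: "J e = J dt - J dtk1" unfolding e_def by (simp add: linear_diff[OF linJ])
  have qq: "(Yk + sig *\<^sub>R (B + J dthalf - Xk1 - Ek)) - (Yk + sig *\<^sub>R (B + J dtk1 - Xk1 - Ek1)) = sig *\<^sub>R (w - J z)"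
    unfolding Jz w_def by (simp add: algebra_simps)
  have wz: "(w - J z) \<bullet> J v = 0" for v
  proof -
    have "((Yk + sig *\<^sub>R (B + J dthalf - Xk1 - Ek)) - (Yk + sig *\<^sub>R (B + J dtk1 - Xk1 - Ek1))) \<bullet> J v = 0"
      unfolding inner_diff_left q q1 by simp
    then have "sig * ((w - J z) \<bullet> J v) = 0"
      unfolding qq inner_scaleR_left .
    then show ?thesis using assms(4) by simp
  qed
  define a where "a = g d"
  have da: "(d - J a) \<bullet> J v = 0" for v unfolding a_def by (rule perp)
  have gEk: "g (E - Ek) = a + z"
  proof (rule uniq, rule allI)
    fix v
    have "E - Ek - J (a + z) = (d - J a) + (w - J z)" unfolding d_def w_def by (simp add: linear_add[OF linJ] algebra_simps)
    then show "(E - Ek - J (a + z)) \<bullet> J v = 0" using da[of v] wz[of v] by (simp add: inner_add_left)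
  qed
  have gw: "g w = z" by (rule uniq) (use wz in blast)
  have T1: "T_seminorm_sq J ((E, dt) - (Ek, dtk)) = (d + w) \<bullet> (J a + J z)"
    unfolding Tf using gEk by (simp add: d_def w_def linear_add[OF linJ])
  have T0: "T_seminorm_sq J ((Ek1, dtk1) - (Ek, dtk)) = w \<bullet> J z"
    unfolding Tf using gw by (simp add: w_def)
  have o1: "d \<bullet> J a = J a \<bullet> J a" using da[of a] by (simp add: inner_diff_left)
  have o2: "d \<bullet> J z = J a \<bullet> J z" using da[of z] by (simp add: inner_diff_left)
  have o3: "w \<bullet> J a = J a \<bullet> J z" using wz[of a] by (simp add: inner_diff_left inner_diff_right inner_commute)
  have F3: "T_seminorm_sq J ((E, dt) - (Ek, dtk)) = T_seminorm_sq J ((Ek1, dtk1) - (Ek, dtk)) + J a \<bullet> J a + 2 * (J a \<bullet> J z)"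
    unfolding T1 T0 by (simp add: inner_add_left inner_add_right o1 o2 o3)
  define u where "u = J e - d"
  have rE: "B + J dt - Xk1 - E = r1 + u" unfolding r1_def u_def Je d_def by (simp add: algebra_simps)
  have qu: "(Yk + sig *\<^sub>R r1) \<bullet> u = - ((Yk + sig *\<^sub>R r1) \<bullet> d)"
    using q1[of e] unfolding u_def r1_def by (simp add: inner_diff_right)
  have F1: "aug_lag lam sig B J Xk1 E dt Yk = aug_lag lam sig B J Xk1 Ek1 dtk1 Yk + lam * (l1_norm E - l1_norm Ek1)
      - (Yk \<bullet> d + sig * (r1 \<bullet> d)) + sig/2 * (norm u)\<^sup>2"
  proof -
    have "Yk \<bullet> u + sig * (r1 \<bullet> u) = - (Yk \<bullet> d + sig * (r1 \<bullet> d))"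
      using qu by (simp add: inner_add_left)
    then show ?thesis unfolding aug_lag_def rE r1_def[symmetric] nsq
      by (simp add: algebra_simps inner_add_right)
  qed
  have F2: "Yk \<bullet> d + sig * (r1 \<bullet> d) - sig * (J a \<bullet> J z) \<le> lam * (l1_norm E - l1_norm Ek1)"
  proof -
    have hb: "B + J dthalf - Xk1 - Ek1 = r1 - J z" unfolding r1_def Jz by simp
    have o2': "J z \<bullet> d = J a \<bullet> J z" using o2 by (simp add: inner_commute)
    have "(Yk + sig *\<^sub>R (B + J dthalf - Xk1 - Ek1)) \<bullet> (E - Ek1) = Yk \<bullet> d + sig * (r1 \<bullet> d) - sig * (J a \<bullet> J z)"
      unfolding d_def[symmetric] hb by (simp add: inner_add_left inner_diff_left o2' right_diff_distrib)
    then show ?thesis using Eo by simp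
  qed
  have F4: "0 < sig * ((norm u)\<^sup>2 + J a \<bullet> J a)"
  proof -
    have "(norm u)\<^sup>2 + J a \<bullet> J a \<noteq> 0"
    proof
      assume h: "(norm u)\<^sup>2 + J a \<bullet> J a = 0"
      have "(norm u)\<^sup>2 = 0" "J a \<bullet> J a = 0" using h by (smt (verit) inner_ge_zero zero_le_power2)+
      then have u0: "u = 0" and a0: "J a = 0" by auto
      have "g d = e" by (rule uniq) (use u0 in \<open>simp add: u_def\<close>)
      then have "J e = 0" using a0 a_def by simp
      then have d0: "d = 0" using u0 u_def by simp
      have "(adjoint J \<circ> J) e = (adjoint J \<circ> J) 0"
        using \<open>J e = 0\<close> linear_0[OF linA] linear_0[OF linJ] by simp
      then have "e = 0" using bij_is_inj[OF assms(2)] by (meson injD)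
      then show False using ne d0 unfolding d_def e_def by simp
    qed
    moreover have "0 \<le> (norm u)\<^sup>2 + J a \<bullet> J a" by simp
    ultimately have "0 < (norm u)\<^sup>2 + J a \<bullet> J a" by linarith
    then show ?thesis using assms(4) by (rule mult_pos_pos[rotated])
  qed
  show "aug_lag lam sig B J Xk1 Ek1 dtk1 Yk + sig / 2 * T_seminorm_sq J ((Ek1, dtk1) - (Ek, dtk))
         < aug_lag lam sig B J Xk1 E dt Yk + sig / 2 * T_seminorm_sq J ((E, dt) - (Ek, dtk))"
    by (rule fin_helper[OF F1 F2 F3 F4])
qed

end
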